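(* Let $x_i,x_j\in V$ be distinct vertices with $x_i$ a potential parent of $x_j$. Then $x_i,x_j$ are not in PP1 relation if and only if $x_i\not\perp x_j$.
   Context: Let $G=(V,E)$ be a DAG on $V=\{x_1,\dots,x_d\}$ whose vertices are random variables generated by a nonlinear additive noise model $x_i=f_i(\mathrm{Pa}(x_i))+\varepsilon_i$ with jointly independent noise terms, assumed identifiable in the sense of Peters et al. (2014) for nonlinear ANMs, and with distribution Markov and faithful to $G$. $\mathrm{Pa}$, $\mathrm{De}$ denote parents and descendants. A path is active (relative to the empty set) if it contains no collider (a vertex with both adjacent path edges pointing into it). A potential parent of $x_j$ is a vertex $x_i\neq x_j$ with $x_i\notin\mathrm{De}(x_j)$. With $C=\mathrm{Pa}(x_j)\setminus\{x_i\}$, the pair is in PP1 relation if $x_i\notin\mathrm{Pa}(x_j)$ and there is no active path between $x_i$ and any vertex of $C$. $\perp$ denotes statistical independence. *)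

theory Defs
  imports "HOL-Probability.Probability"
begin

definition parents :: "('v \<times> 'v) set \<Rightarrow> 'v \<Rightarrow> 'v set" where
  "parents E j = {i. (i, j) \<in> E}"

definition descendants :: "('v \<times> 'v) set \<Rightarrow> 'v \<Rightarrow> 'v set" where
  "descendants E j = {k. (j, k) \<in> E\<^sup>+}"

definition adj :: "('v \<times> 'v) set \<Rightarrow> 'v \<Rightarrow> 'v \<Rightarrow> bool" where
  "adj E u v \<longleftrightarrow> (u, v) \<in> E \<or> (v, u) \<in> E"

definition is_path :: "('v \<times> 'v) set \<Rightarrow> 'v list \<Rightarrow> bool" where
  "is_path E p \<longleftrightarrow> p \<noteq> [] \<and> distinct p \<and>
     (\<forall>k. Suc k < length p \<longrightarrow> adj E (p ! k) (p ! Suc k))"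

definition collider :: "('v \<times> 'v) set \<Rightarrow> 'v list \<Rightarrow> nat \<Rightarrow> bool" where
  "collider E p k \<longleftrightarrow> 0 < k \<and> Suc k < length p \<and>
     (p ! (k - 1), p ! k) \<in> E \<and> (p ! Suc k, p ! k) \<in> E"

text \<open>Active path relative to the empty set: no collider.\<close>
definition active_path :: "('v \<times> 'v) set \<Rightarrow> 'v list \<Rightarrow> bool" where
  "active_path E p \<longleftrightarrow> is_path E p \<and> (\<forall>k. \<not> collider E p k)"

definition active_between :: "('v \<times> 'v) set \<Rightarrow> 'v \<Rightarrow> 'v \<Rightarrow> bool" where
  "active_between E a b \<longleftrightarrow> (\<exists>p. active_path E p \<and> hd p = a \<and> last p = b)"

definition potential_parent :: "('v \<times> 'v) set \<Rightarrow> 'v \<Rightarrow> 'v \<Rightarrow> bool" where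
  "potential_parent E i j \<longleftrightarrow> i \<noteq> j \<and> i \<notin> descendants E j"

definition PP1 :: "('v \<times> 'v) set \<Rightarrow> 'v \<Rightarrow> 'v \<Rightarrow> bool" where
  "PP1 E i j \<longleftrightarrow> i \<notin> parents E j \<and>
     \<not> (\<exists>c \<in> parents E j - {i}. active_between E i c)"

definition d_connecting :: "('v \<times> 'v) set \<Rightarrow> 'v set \<Rightarrow> 'v list \<Rightarrow> bool" where
  "d_connecting E S p \<longleftrightarrow> is_path E p \<and>
     (\<forall>k. 0 < k \<and> Suc k < length p \<longrightarrow>
        (collider E p k \<longrightarrow> (p ! k \<in> S \<or> descendants E (p ! k) \<inter> S \<noteq> {})) \<and>
        (\<not> collider E p k \<longrightarrow> p ! k \<notin> S))"

definition d_separated :: "('v \<times> 'v) set \<Rightarrow> 'v set \<Rightarrow> 'v set \<Rightarrow> 'v set \<Rightarrow> bool" where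
  "d_separated E A B S \<longleftrightarrow>
     \<not> (\<exists>p. hd p \<in> A \<and> last p \<in> B \<and> d_connecting E S p)"

definition gen_alg :: "'a measure \<Rightarrow> ('v \<Rightarrow> 'a \<Rightarrow> real) \<Rightarrow> 'v set \<Rightarrow> 'a measure" where
  "gen_alg M X S = sigma (space M) {X v -` U \<inter> space M | v U. v \<in> S \<and> U \<in> sets borel}"

definition cond_indep :: "'a measure \<Rightarrow> ('v \<Rightarrow> 'a \<Rightarrow> real) \<Rightarrow> 'v set \<Rightarrow> 'v set \<Rightarrow> 'v set \<Rightarrow> bool" where
  "cond_indep M X A B S \<longleftrightarrow>
     (\<forall>P Q. P \<in> sets (gen_alg M X A) \<and> Q \<in> sets (gen_alg M X B) \<longrightarrow>
        (AE \<omega> in M. real_cond_exp M (gen_alg M X S) (indicator (P \<inter> Q)) \<omega> =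
            real_cond_exp M (gen_alg M X S) (indicator P) \<omega> *
            real_cond_exp M (gen_alg M X S) (indicator Q) \<omega>))"

definition markov :: "'a measure \<Rightarrow> ('v \<Rightarrow> 'a \<Rightarrow> real) \<Rightarrow> 'v set \<Rightarrow> ('v \<times> 'v) set \<Rightarrow> bool" where
  "markov M X V E \<longleftrightarrow> (\<forall>A B S. A \<subseteq> V \<and> B \<subseteq> V \<and> S \<subseteq> V \<and>
     A \<inter> B = {} \<and> A \<inter> S = {} \<and> B \<inter> S = {} \<longrightarrow>
     d_separated E A B S \<longrightarrow> cond_indep M X A B S)"

definition faithful :: "'a measure \<Rightarrow> ('v \<Rightarrow> 'a \<Rightarrow> real) \<Rightarrow> 'v set \<Rightarrow> ('v \<times> 'v) set \<Rightarrow> bool" where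
  "faithful M X V E \<longleftrightarrow> (\<forall>A B S. A \<subseteq> V \<and> B \<subseteq> V \<and> S \<subseteq> V \<and>
     A \<inter> B = {} \<and> A \<inter> S = {} \<and> B \<inter> S = {} \<longrightarrow>
     cond_indep M X A B S \<longrightarrow> d_separated E A B S)"

end

theory Submission imports Defs begin
lemma cexp_const:
  assumes P: "prob_space M" and sF: "sets F = {{}, space M}" and spF: "space F = space M"
    and fi: "integrable M f" and w: "\<omega> \<in> space M"
  shows "real_cond_exp M F f \<omega> = prob_space.expectation M f"
proof -
  interpret prob_space M by fact
  have sub: "subalgebra M F" unfolding subalgebra_def using sF spF by auto
  interpret finite_measure_subalgebra M F
    by unfold_locales (fact sub)
  define g where "g = real_cond_exp M F f"
  have gm: "g \<in> borel_measurable F" unfolding g_def by simp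
  have const: "g \<omega>' = g \<omega>" if "\<omega>' \<in> space M" for \<omega>'
  proof -
    have "g -` {g \<omega>} \<inter> space F \<in> sets F"
      using measurable_sets[OF gm, of "{g \<omega>}"] by simp
    moreover have "\<omega> \<in> g -` {g \<omega>} \<inter> space F" using w spF by simp
    ultimately have "g -` {g \<omega>} \<inter> space F = space M" using sF by auto
    then show ?thesis using that spF by auto
  qed
  have "(\<integral> x \<in> space M. f x \<partial>M) = (\<integral> x \<in> space M. g x \<partial>M)"
    unfolding g_def by (rule real_cond_exp_intA[OF fi]) (simp add: sF)
  hence "expectation f = expectation g"
    using set_integral_space[OF fi] set_integral_space[of M g] real_cond_exp_int(1)[OF fi]
    unfolding g_def by simp
  also have "expectation g = expectation (\<lambda>_. g \<omega>)"
    by (rule Bochner_Integration.integral_cong) (auto simp: const)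
  also have "\<dots> = g \<omega>" by (simp add: prob_space)
  finally show ?thesis unfolding g_def by simp
qed

lemma gen_alg_single:
  "sets (gen_alg M X {v}) = sigma_sets (space M) {X v -` A \<inter> space M | A. A \<in> sets borel}"
proof -
  have e: "{X u -` U \<inter> space M | u U. u \<in> {v} \<and> U \<in> sets borel} = {X v -` A \<inter> space M | A. A \<in> sets borel}"
    by auto
  show ?thesis unfolding gen_alg_def e by (rule sets_measure_of) auto
qed

lemma gen_alg_empty:
  "sets (gen_alg M X {}) = {{}, space M}" "space (gen_alg M X {}) = space M"
proof -
  have e: "{X u -` U \<inter> space M | u U. u \<in> {} \<and> U \<in> sets borel} = {}" by auto
  show "sets (gen_alg M X {}) = {{}, space M}" unfolding gen_alg_def e
    by (simp add: sigma_sets_empty_eq)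
  show "space (gen_alg M X {}) = space M" unfolding gen_alg_def e by simp
qed

lemma cond_indep_empty_iff:
  assumes P: "prob_space M" and ma: "X a \<in> borel_measurable M" and mb: "X b \<in> borel_measurable M"
  shows "cond_indep M X {a} {b} {} \<longleftrightarrow> prob_space.indep_var M borel (X a) borel (X b)"
proof -
  interpret prob_space M by fact
  let ?F = "gen_alg M X {}"
  let ?A = "sigma_sets (space M) {X a -` A \<inter> space M | A. A \<in> sets borel}"
  let ?B = "sigma_sets (space M) {X b -` A \<inter> space M | A. A \<in> sets borel}"
  have Aev: "?A \<subseteq> events"
    by (rule sets.sigma_sets_subset) (auto intro: measurable_sets[OF ma])
  have Bev: "?B \<subseteq> events"
    by (rule sets.sigma_sets_subset) (auto intro: measurable_sets[OF mb])
  have ce: "real_cond_exp M ?F (indicator S) \<omega> = prob S" if "S \<in> events" "\<omega> \<in> space M" for S \<omega>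
  proof -
    have "integrable M (indicator S :: _ \<Rightarrow> real)"
      by (rule integrable_real_indicator) (auto simp: that less_top[symmetric])
    then show ?thesis
      using cexp_const[OF P gen_alg_empty(1)[of M X] gen_alg_empty(2)[of M X], of "indicator S" \<omega>] that
      by simp
  qed
  have "cond_indep M X {a} {b} {} \<longleftrightarrow> (\<forall>p\<in>?A. \<forall>q\<in>?B. prob (p \<inter> q) = prob p * prob q)"
  proof -
    have "(AE \<omega> in M. real_cond_exp M ?F (indicator (p \<inter> q)) \<omega> =
            real_cond_exp M ?F (indicator p) \<omega> * real_cond_exp M ?F (indicator q) \<omega>)
          \<longleftrightarrow> prob (p \<inter> q) = prob p * prob q" if "p \<in> ?A" "q \<in> ?B" for p q
    proof -
      have ev: "p \<in> events" "q \<in> events" "p \<inter> q \<in> events" using that Aev Bev by auto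
      have "(AE \<omega> in M. real_cond_exp M ?F (indicator (p \<inter> q)) \<omega> =
            real_cond_exp M ?F (indicator p) \<omega> * real_cond_exp M ?F (indicator q) \<omega>)
          \<longleftrightarrow> (AE \<omega> in M. prob (p \<inter> q) = prob p * prob q)"
        by (rule AE_cong) (simp add: ce ev)
      then show ?thesis by simp
    qed
    then show ?thesis unfolding cond_indep_def gen_alg_single by blast
  qed
  also have "\<dots> \<longleftrightarrow> indep_var borel (X a) borel (X b)"
    unfolding indep_var_eq indep_sets2_eq using Aev Bev ma mb by auto
  finally show ?thesis .
qed

lemma active_prefix:
  assumes "active_path E p" "0 < m" "m \<le> length p"
  shows "active_path E (take m p)"
proof -
  have ip: "is_path E p" and nc: "\<And>k. \<not> collider E p k" using assms(1) unfolding active_path_def by auto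
  have "is_path E (take m p)"
    using ip assms(2,3) unfolding is_path_def by (auto simp: nth_take)
  moreover have "\<not> collider E (take m p) k" for k
  proof
    assume "collider E (take m p) k"
    then have "collider E p k" using assms(3) unfolding collider_def by (auto simp: nth_take)
    with nc show False by blast
  qed
  ultimately show ?thesis unfolding active_path_def by blast
qed

lemma last_take_nth_conv: "i < length p \<Longrightarrow> last (take (Suc i) p) = p ! i"
  by (subst last_conv_nth) (auto simp: min_def le_Suc_eq)

lemma d_connecting_empty: "d_connecting E {} p \<longleftrightarrow> active_path E p"
  unfolding d_connecting_def active_path_def collider_def by auto

lemma d_sep_iff: "d_separated E {a} {b} {} \<longleftrightarrow> \<not> active_between E a b"
  unfolding d_separated_def active_between_def d_connecting_empty by auto

lemma not_PP1_active:
  assumes ac: "acyclic E" and ne: "xi \<noteq> xj" and np: "\<not> PP1 E xi xj"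
  shows "active_between E xi xj"
proof (cases "xi \<in> parents E xj")
  case True
  let ?p = "[xi, xj]"
  have "active_path E ?p"
    using True ne unfolding active_path_def is_path_def collider_def adj_def parents_def
    by (auto simp: less_Suc_eq)
  then show ?thesis unfolding active_between_def by force
next
  case False
  then obtain c p where c: "c \<in> parents E xj" "c \<noteq> xi" and ap: "active_path E p"
    and hp: "hd p = xi" and lp: "last p = c"
    using np False unfolding PP1_def active_between_def by blast
  have ip: "is_path E p" and nc: "\<And>k. \<not> collider E p k" using ap unfolding active_path_def by auto
  have pne: "p \<noteq> []" using ip unfolding is_path_def by auto
  have cxj: "(c, xj) \<in> E" using c unfolding parents_def by auto
  show ?thesis
  proof (cases "xj \<in> set p")
    case True
    then obtain i where i: "i < length p" "p ! i = xj" by (auto simp: in_set_conv_nth)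
    have "active_path E (take (Suc i) p)" by (rule active_prefix[OF ap]) (use i in auto)
    moreover have "hd (take (Suc i) p) = xi" using hp pne by (simp add: hd_take)
    moreover have "last (take (Suc i) p) = xj" using i by (simp add: last_take_nth_conv)
    ultimately show ?thesis unfolding active_between_def by blast
  next
    case False
    let ?q = "p @ [xj]"
    have nth1: "?q ! k = p ! k" if "k < length p" for k using that by (simp add: nth_append)
    have nth2: "?q ! length p = xj" by simp
    have lastp: "p ! (length p - 1) = c" using lp pne by (simp add: last_conv_nth)
    have "is_path E ?q"
      unfolding is_path_def
    proof (intro conjI allI impI)
      show "?q \<noteq> []" by simp
      show "distinct ?q" using ip False unfolding is_path_def by auto
      fix k assume k: "Suc k < length ?q"
      show "adj E (?q ! k) (?q ! Suc k)"
      proof (cases "Suc k < length p")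
        case True
        then show ?thesis using ip nth1[of k] nth1[of "Suc k"] unfolding is_path_def by auto
      next
        case False
        then have "k = length p - 1" using k by simp
        then show ?thesis using lastp cxj pne unfolding adj_def
          by (simp add: nth_append)
      qed
    qed
    moreover have "\<not> collider E ?q k" for k
    proof
      assume co: "collider E ?q k"
      then have k: "0 < k" "Suc k < length ?q" unfolding collider_def by auto
      show False
      proof (cases "Suc k < length p")
        case True
        then have "collider E p k" using co nth1[of k] nth1[of "Suc k"] nth1[of "k - 1"]
          unfolding collider_def by auto
        with nc show False by blast
      next
        case False
        then have sk: "k = length p - 1" using k by simp
        then have "?q ! k = c" "?q ! Suc k = xj" using lastp pne by (auto simp: nth_append)
        then have "(xj, c) \<in> E" using co unfolding collider_def by auto
        with cxj have "(c, c) \<in> E\<^sup>+" by auto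
        with ac show False unfolding acyclic_def by blast
      qed
    qed
    ultimately have "active_path E ?q" unfolding active_path_def by blast
    moreover have "hd ?q = xi" using hp pne by simp
    moreover have "last ?q = xj" by simp
    ultimately show ?thesis unfolding active_between_def by blast
  qed
qed

lemma active_not_PP1:
  assumes ne: "xi \<noteq> xj" and pp: "potential_parent E xi xj" and ab: "active_between E xi xj"
  shows "\<not> PP1 E xi xj"
proof
  assume pp1: "PP1 E xi xj"
  obtain p where ap: "active_path E p" and hp: "hd p = xi" and lp: "last p = xj"
    using ab unfolding active_between_def by auto
  have ip: "is_path E p" and nc: "\<And>k. \<not> collider E p k" using ap unfolding active_path_def by auto
  have pne: "p \<noteq> []" using ip unfolding is_path_def by auto
  define n where "n = length p"
  have n2: "n \<ge> 2"
  proof (rule ccontr)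
    assume "\<not> n \<ge> 2"
    moreover have "length p > 0" using pne by simp
    ultimately have "length p = 1" using n_def by linarith
    then have "hd p = last p" using pne by (simp add: hd_conv_nth last_conv_nth)
    with hp lp ne show False by simp
  qed
  have p0: "p ! 0 = xi" using hp pne by (simp add: hd_conv_nth)
  have pl: "p ! (n - 1) = xj" using lp pne n_def by (simp add: last_conv_nth)
  define c where "c = p ! (n - 2)"
  have "adj E c xj" using ip n2 pl unfolding is_path_def c_def n_def
    by (metis Suc_diff_Suc Suc_1 diff_Suc_1 diff_less le_eq_less_or_eq less_2_cases_iff
         less_le_trans not_less_eq_eq numeral_1_eq_Suc_0 numeral_One pos2)
  then consider "(c, xj) \<in> E" | "(xj, c) \<in> E" unfolding adj_def by blast
  then show False
  proof cases
    case 1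
    show False
    proof (cases "c = xi")
      case True
      then show False using 1 pp1 unfolding PP1_def parents_def by auto
    next
      case False
      have "active_path E (take (n - 1) p)" by (rule active_prefix[OF ap]) (use n2 n_def in auto)
      moreover have "hd (take (n - 1) p) = xi" using hp pne n2 by (simp add: hd_take)
      moreover have "last (take (n - 1) p) = c" using n2 n_def c_def
        last_take_nth_conv[of "n - 2" p] by (simp add: Suc_diff_Suc numeral_2_eq_2)
      ultimately have "active_between E xi c" unfolding active_between_def by blast
      then show False using pp1 1 False unfolding PP1_def parents_def by auto
    qed
  next
    case 2
    have key: "(p ! Suc k, p ! k) \<in> E \<and> (xj, p ! k) \<in> E\<^sup>+" if "k \<le> n - 2" for k
      using that
    proof (induction k rule: inc_induct)
      case base
      have "Suc (n - 2) = n - 1" using n2 by simp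
      then show ?case using 2 pl c_def by auto
    next
      case (step m)
      have "adj E (p ! m) (p ! Suc m)" using ip step.hyps n_def unfolding is_path_def by auto
      moreover have "\<not> ((p ! m, p ! Suc m) \<in> E \<and> (p ! Suc (Suc m), p ! Suc m) \<in> E)"
        using nc[of "Suc m"] step.hyps n_def unfolding collider_def by auto
      ultimately have e: "(p ! Suc m, p ! m) \<in> E" using step.IH unfolding adj_def by auto
      then show ?case using step.IH by auto
    qed
    have "(xj, xi) \<in> E\<^sup>+" using key[of 0] p0 by auto
    then show False using pp unfolding potential_parent_def descendants_def by auto
  qed
qed

theorem lemma9:
  fixes M :: "'a measure" and V :: "'v set" and E :: "('v \<times> 'v) set"
    and X N :: "'v \<Rightarrow> 'a \<Rightarrow> real" and f :: "'v \<Rightarrow> ('v \<Rightarrow> real) \<Rightarrow> real"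
    and xi xj :: 'v
  assumes "prob_space M"
    and "finite V" and "E \<subseteq> V \<times> V" and "acyclic E"
    and "\<forall>v\<in>V. X v \<in> borel_measurable M"
    and "prob_space.indep_vars M (\<lambda>_. borel) N V"
    and "\<forall>v\<in>V. \<forall>\<omega>\<in>space M.
           X v \<omega> = f v (\<lambda>u. if u \<in> parents E v then X u \<omega> else 0) + N v \<omega>"
    and "markov M X V E" and "faithful M X V E"
    and "xi \<in> V" and "xj \<in> V" and "xi \<noteq> xj"
    and "potential_parent E xi xj"
  shows "\<not> PP1 E xi xj \<longleftrightarrow> \<not> prob_space.indep_var M borel (X xi) borel (X xj)"
proof -
  have ci: "cond_indep M X {xi} {xj} {} \<longleftrightarrow> d_separated E {xi} {xj} {}"
  proof -
    have c: "{xi} \<subseteq> V" "{xj} \<subseteq> V" "{} \<subseteq> V" "{xi} \<inter> {xj} = {}" "{xi} \<inter> {} = {}" "{xj} \<inter> {} = {}"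
      using assms(10,11,12) by auto
    show ?thesis
      using assms(8)[unfolded markov_def, rule_format, OF conjI[OF c(1) conjI[OF c(2) conjI[OF c(3) conjI[OF c(4) conjI[OF c(5) c(6)]]]]]]
        assms(9)[unfolded faithful_def, rule_format, OF conjI[OF c(1) conjI[OF c(2) conjI[OF c(3) conjI[OF c(4) conjI[OF c(5) c(6)]]]]]]
      by blast
  qed
  have iv: "cond_indep M X {xi} {xj} {} \<longleftrightarrow> prob_space.indep_var M borel (X xi) borel (X xj)"
    by (rule cond_indep_empty_iff[OF assms(1)]) (use assms(5,10,11) in auto)
  have "PP1 E xi xj \<longleftrightarrow> \<not> active_between E xi xj"
    using not_PP1_active[OF assms(4,12)] active_not_PP1[OF assms(12,13)] by blast
  then show ?thesis using ci iv d_sep_iff[of E xi xj] by simp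
qed

end
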